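(* Let $\mathbf v\in V$ be nonzero with $L_1\mathbf v=L_2\mathbf v=\mathbf 0$, $H_1\mathbf v=m_1\mathbf v$ and $H_2\mathbf v=m_2\mathbf v$. Then $L_3R_1^i\mathbf v=L_3R_2^j\mathbf v=\mathbf 0$ for all nonnegative integers $i,j$, and for all positive integers $i,j$: (i) $L_3R_1^iR_2^j\mathbf v=-ij(m_2-j+1)\,R_1^{i-1}R_2^{j-1}\mathbf v$; (ii) $L_3R_2^jR_1^i\mathbf v=ij(m_1-i+1)\,R_2^{j-1}R_1^{i-1}\mathbf v$.
   Context: Let $d\ge1$, $\mathbb F_3=\{0,1,2\}$, $X=\mathbb F_3^d$, and $V=\mathbb C^X$ with standard basis $\{\hat y:y\in X\}$. The type of $y\in X$ is $(r,s,t)$ where $r,s,t$ are the numbers of coordinates of $y$ equal to $0,1,2$ respectively ($r+s+t=d$). Define linear operators on $V$ by their action on basis vectors: $R_1\hat y$ is the sum of $\hat z$ over all $z$ obtained from $y$ by changing exactly one coordinate equal to $0$ into $1$ (an empty sum is $0$); similarly $R_2$ changes one coordinate $1\mapsto2$, $L_1$ changes one coordinate $1\mapsto 0$, $L_2$ changes one coordinate $2\mapsto1$, $L_3$ changes one coordinate $2\mapsto 0$. For $y$ of type $(r,s,t)$, $H_1\hat y=(r-s)\hat y$ and $H_2\hat y=(s-t)\hat y$. *)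

theory Defs
  imports Complex_Main "HOL-Library.Numeral_Type"
begin

text \<open>X = F_3^d is modelled as the type of functions 'n => 3 for a finite index
type 'n with CARD('n) = d.\<close>

type_synonym 'n vec3 = "('n \<Rightarrow> 3) \<Rightarrow> complex"

definition basis3 :: "('n \<Rightarrow> 3) \<Rightarrow> 'n vec3" where
  "basis3 y = (\<lambda>z. if z = y then 1 else 0)"

definition change_op :: "3 \<Rightarrow> 3 \<Rightarrow> ('n::finite) vec3 \<Rightarrow> 'n vec3" where
  "change_op a b v = (\<lambda>z. \<Sum>y\<in>UNIV. v y *
      (\<Sum>k\<in>{k. y k = a}. basis3 (y(k := b)) z))"

definition R1 :: "('n::finite) vec3 \<Rightarrow> 'n vec3" where "R1 = change_op 0 1"
definition R2 :: "('n::finite) vec3 \<Rightarrow> 'n vec3" where "R2 = change_op 1 2"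
definition L1 :: "('n::finite) vec3 \<Rightarrow> 'n vec3" where "L1 = change_op 1 0"
definition L2 :: "('n::finite) vec3 \<Rightarrow> 'n vec3" where "L2 = change_op 2 1"
definition L3 :: "('n::finite) vec3 \<Rightarrow> 'n vec3" where "L3 = change_op 2 0"

text \<open>Number of coordinates of y equal to a (so the type of y is (cnt 0, cnt 1, cnt 2)).\<close>
definition cnt :: "3 \<Rightarrow> ('n::finite \<Rightarrow> 3) \<Rightarrow> nat" where
  "cnt a y = card {k. y k = a}"

definition H1 :: "('n::finite) vec3 \<Rightarrow> 'n vec3" where
  "H1 v = (\<lambda>y. (of_int (int (cnt 0 y) - int (cnt 1 y))) * v y)"
definition H2 :: "('n::finite) vec3 \<Rightarrow> 'n vec3" where
  "H2 v = (\<lambda>y. (of_int (int (cnt 1 y) - int (cnt 2 y))) * v y)"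

definition smul3 :: "complex \<Rightarrow> 'n vec3 \<Rightarrow> 'n vec3" (infixr "\<cdot>\<^sub>V" 75) where
  "c \<cdot>\<^sub>V v = (\<lambda>y. c * v y)"
definition zero3 :: "'n vec3" ("0\<^sub>V") where "0\<^sub>V = (\<lambda>y. 0)"

end

theory Submission
  imports Defs
begin

lemma sum_restr: "(\<Sum>k\<in>{k. P k}. g k) = (\<Sum>k\<in>(UNIV::('a::finite) set). if P k then g k else 0)"
  by (simp add: sum.If_cases)

lemma op_eq:
  fixes v :: "('n::finite) vec3"
  assumes "a \<noteq> b"
  shows "change_op a b v z = (\<Sum>k\<in>{k. z k = b}. v (z(k:=a)))"
proof -
  have "change_op a b v z = (\<Sum>y\<in>UNIV. \<Sum>k\<in>UNIV. if y k = a \<and> z = y(k:=b) then v y else 0)"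
    unfolding change_op_def basis3_def
    by (simp add: sum_distrib_left sum_restr) (intro sum.cong refl; simp)
  also have "\<dots> = (\<Sum>k\<in>UNIV. \<Sum>y\<in>UNIV. if y k = a \<and> z = y(k:=b) then v y else 0)"
    by (rule sum.swap)
  also have "\<dots> = (\<Sum>k\<in>UNIV. if z k = b then v (z(k:=a)) else 0)"
  proof (rule sum.cong[OF refl])
    fix k
    have iff: "(y k = a \<and> z = y(k:=b)) = (y = z(k:=a) \<and> z k = b)" for y
    proof
      assume h: "y k = a \<and> z = y(k:=b)"
      then have "z k = b" by simp
      moreover have "y = z(k:=a)"
      proof
        fix x show "y x = (z(k:=a)) x" using h by (cases "x = k") simp_all
      qed
      ultimately show "y = z(k:=a) \<and> z k = b" by simp
    next
      assume h: "y = z(k:=a) \<and> z k = b"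
      then show "y k = a \<and> z = y(k:=b)" using assms by (simp add: fun_upd_idem)
    qed
    have "(\<Sum>y\<in>UNIV. if y k = a \<and> z = y(k:=b) then v y else 0) =
          (\<Sum>y\<in>UNIV. if y = z(k:=a) \<and> z k = b then v y else 0)"
      by (rule sum.cong[OF refl]) (simp only: iff)
    also have "\<dots> = (if z k = b then v (z(k:=a)) else 0)"
      by (cases "z k = b") simp_all
    finally show "(\<Sum>y\<in>UNIV. if y k = a \<and> z = y(k:=b) then v y else 0) = (if z k = b then v (z(k:=a)) else 0)" .
  qed
  finally show ?thesis by (simp add: sum_restr)
qed



definition DD :: "3 \<Rightarrow> 3 \<Rightarrow> 3 \<Rightarrow> 3 \<Rightarrow> ('n::finite) vec3 \<Rightarrow> ('n \<Rightarrow> 3) \<Rightarrow> complex" where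
  "DD c d a b v z = (\<Sum>k\<in>{k. z k = d}. \<Sum>l\<in>{l. l \<noteq> k \<and> z l = b}. v (z(k:=c, l:=a)))"

lemma comp_eq:
  fixes v :: "('n::finite) vec3"
  assumes "a \<noteq> b" "c \<noteq> d"
  shows "change_op c d (change_op a b v) z =
     (if c = b then (\<Sum>k\<in>{k. z k = d}. v (z(k:=a))) else 0) + DD c d a b v z"
proof -
  have "change_op c d (change_op a b v) z =
     (\<Sum>k\<in>{k. z k = d}. \<Sum>l\<in>{l. (z(k:=c)) l = b}. v (z(k:=c, l:=a)))"
    using assms by (simp add: op_eq)
  also have "\<dots> = (\<Sum>k\<in>{k. z k = d}. (if c = b then v (z(k:=a)) else 0) +
        (\<Sum>l\<in>{l. l \<noteq> k \<and> z l = b}. v (z(k:=c, l:=a))))"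
  proof (rule sum.cong[OF refl])
    fix k
    show "(\<Sum>l\<in>{l. (z(k:=c)) l = b}. v (z(k:=c, l:=a))) = (if c = b then v (z(k:=a)) else 0) +
        (\<Sum>l\<in>{l. l \<noteq> k \<and> z l = b}. v (z(k:=c, l:=a)))"
    proof (cases "c = b")
      case True
      then have "{l. (z(k:=c)) l = b} = insert k {l. l \<noteq> k \<and> z l = b}" by auto
      then show ?thesis using True by simp
    next
      case False
      then have "{l. (z(k:=c)) l = b} = {l. l \<noteq> k \<and> z l = b}" by auto
      then show ?thesis using False by simp
    qed
  qed
  also have "\<dots> = (\<Sum>k\<in>{k. z k = d}. (if c = b then v (z(k:=a)) else 0)) + DD c d a b v z" 
    by (simp add: sum.distrib DD_def)
  finally show ?thesis
    by (cases "c = b") simp_all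
qed

lemma DD_swap: "DD c d a b v z = DD a b c d v z"
proof -
  have "DD c d a b v z = (\<Sum>k\<in>UNIV. \<Sum>l\<in>UNIV. if z k = d \<and> l \<noteq> k \<and> z l = b then v (z(k:=c, l:=a)) else 0)"
    unfolding DD_def sum_restr by (rule sum.cong[OF refl], auto)
  also have "\<dots> = (\<Sum>l\<in>UNIV. \<Sum>k\<in>UNIV. if z k = d \<and> l \<noteq> k \<and> z l = b then v (z(k:=c, l:=a)) else 0)"
    by (rule sum.swap)
  also have "\<dots> = DD a b c d v z"
    unfolding DD_def sum_restr
    by (rule sum.cong[OF refl], auto simp: fun_upd_twist intro!: sum.cong)
  finally show ?thesis .
qed


lemma same_sum:
  fixes v :: "('n::finite) vec3"
  shows "(\<Sum>k\<in>{k. z k = a}. v (z(k:=a))) = of_nat (cnt a z) * v z"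
proof -
  have "(\<Sum>k\<in>{k. z k = a}. v (z(k:=a))) = (\<Sum>k\<in>{k. z k = a}. v z)"
    by (rule sum.cong) (auto simp: fun_upd_idem)
  then show ?thesis by (simp add: cnt_def)
qed

lemma cnt_up:
  fixes z :: "'n::finite \<Rightarrow> 3"
  assumes "z k = b" "a \<noteq> b"
  shows "cnt a (z(k:=a)) = Suc (cnt a z)"
proof -
  have "{l. (z(k:=a)) l = a} = insert k {l. z l = a}" by auto
  moreover have "k \<notin> {l. z l = a}" using assms by auto
  ultimately show ?thesis unfolding cnt_def by simp
qed

lemma cnt_down:
  fixes z :: "'n::finite \<Rightarrow> 3"
  assumes "z k = b" "a \<noteq> b"
  shows "int (cnt b (z(k:=a))) = int (cnt b z) - 1"
proof -
  have "{l. (z(k:=a)) l = b} = {l. z l = b} - {k}" using assms by auto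
  moreover have "k \<in> {l. z l = b}" using assms by auto
  moreover then have "card {l. z l = b} \<ge> 1"
    by (metis One_nat_def Suc_leI card_gt_0_iff empty_iff finite)
  ultimately show ?thesis unfolding cnt_def by (simp add: of_nat_diff)
qed

lemma op_smul: "change_op a b (c \<cdot>\<^sub>V w) = c \<cdot>\<^sub>V change_op a b w"
  unfolding change_op_def smul3_def
  by (rule ext) (simp add: sum_distrib_left mult.assoc)

lemma op_zero: "change_op a b 0\<^sub>V = 0\<^sub>V"
  unfolding change_op_def zero3_def by (rule ext) simp

lemma pow_smul: "(change_op a b ^^ n) (c \<cdot>\<^sub>V w) = c \<cdot>\<^sub>V (change_op a b ^^ n) w"
  by (induction n) (simp_all add: op_smul)

lemma pow_zero: "(change_op a b ^^ n) 0\<^sub>V = 0\<^sub>V"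
  by (induction n) (simp_all add: op_zero)


lemma n01: "(0::3) \<noteq> 1" and n10: "(1::3) \<noteq> 0" and n12: "(1::3) \<noteq> 2"
  and n21: "(2::3) \<noteq> 1" and n02: "(0::3) \<noteq> 2" and n20: "(2::3) \<noteq> 0" by simp_all

lemma cnt_down':
  fixes z :: "'n::finite \<Rightarrow> 3"
  assumes "z k = b" "a \<noteq> b"
  shows "cnt b z = Suc (cnt b (z(k:=a)))"
  using cnt_down[of z k b a] assms by linarith

lemma c1: "L3 v z = L1 (L2 v) z - L2 (L1 v) z"
  unfolding L1_def L2_def L3_def
  by (simp only: comp_eq[OF n21 n10] comp_eq[OF n10 n21]) (simp add: op_eq DD_swap[of 1 0 2 1])

lemma c2: "L3 (R1 v) z = R1 (L3 v) z - L2 v z"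
  unfolding R1_def L2_def L3_def
  by (simp only: comp_eq[OF n01 n20] comp_eq[OF n20 n01]) (simp add: op_eq DD_swap[of 0 1 2 0])

lemma c3: "L3 (R2 v) z = R2 (L3 v) z + L1 v z"
  unfolding R2_def L1_def L3_def
  by (simp only: comp_eq[OF n12 n20] comp_eq[OF n20 n12]) (simp add: op_eq DD_swap[of 1 2 2 0])

lemma c4: "L2 (R1 v) = R1 (L2 v)"
  unfolding R1_def L2_def
  by (rule ext, simp only: comp_eq[OF n01 n21] comp_eq[OF n21 n01]) (simp add: op_eq DD_swap[of 0 1 2 1])

lemma c5: "L1 (R2 v) = R2 (L1 v)"
  unfolding R2_def L1_def
  by (rule ext, simp only: comp_eq[OF n12 n10] comp_eq[OF n10 n12]) (simp add: op_eq DD_swap[of 1 2 1 0])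

lemma c6: "L2 (R2 v) z = R2 (L2 v) z + H2 v z"
  unfolding R2_def L2_def H2_def
  by (simp only: comp_eq[OF n12 n21] comp_eq[OF n21 n12]) (simp add: same_sum DD_swap[of 1 2 2 1] algebra_simps)

lemma c7: "L1 (R1 v) z = R1 (L1 v) z + H1 v z"
  unfolding R1_def L1_def H1_def
  by (simp only: comp_eq[OF n01 n10] comp_eq[OF n10 n01]) (simp add: same_sum DD_swap[of 0 1 1 0] algebra_simps)

lemma c8: "H2 (R2 v) z = R2 (H2 v) z - 2 * R2 v z"
proof -
  have "R2 (H2 v) z = (\<Sum>k\<in>{k. z k = 2}. (of_int (int (cnt 1 z) - int (cnt 2 z)) + 2) * v (z(k:=1)))"
    unfolding R2_def H2_def
  proof (simp only: op_eq[OF n12], rule sum.cong[OF refl])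
    fix k assume "k \<in> {k. z k = 2}"
    then have "z k = 2" by simp
    from cnt_up[of z k 2 1, OF this n12] cnt_down'[of z k 2 1, OF this n12] show
      "of_int (int (cnt 1 (z(k := 1))) - int (cnt 2 (z(k := 1)))) * v (z(k := 1)) =
         (of_int (int (cnt 1 z) - int (cnt 2 z)) + 2) * v (z(k := 1))"
      by simp
  qed
  also have "\<dots> = (of_int (int (cnt 1 z) - int (cnt 2 z)) + 2) * (\<Sum>k\<in>{k. z k = 2}. v (z(k:=1)))"
    by (rule sum_distrib_left[symmetric])
  also have "\<dots> = (of_int (int (cnt 1 z) - int (cnt 2 z)) + 2) * R2 v z"
    by (simp only: R2_def op_eq[OF n12])
  finally have e1: "R2 (H2 v) z = (of_int (int (cnt 1 z) - int (cnt 2 z)) + 2) * R2 v z" .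
  have e2: "H2 (R2 v) z = ((of_int (int (cnt 1 z) - int (cnt 2 z)) + 2) - 2) * R2 v z" by (simp add: H2_def)
  show ?thesis unfolding e1 e2 by (simp add: algebra_simps)
qed

lemma c9: "H1 (R1 v) z = R1 (H1 v) z - 2 * R1 v z"
proof -
  have "R1 (H1 v) z = (\<Sum>k\<in>{k. z k = 1}. (of_int (int (cnt 0 z) - int (cnt 1 z)) + 2) * v (z(k:=0)))"
    unfolding R1_def H1_def
  proof (simp only: op_eq[OF n01], rule sum.cong[OF refl])
    fix k assume "k \<in> {k. z k = 1}"
    then have "z k = 1" by simp
    from cnt_up[of z k 1 0, OF this n01] cnt_down'[of z k 1 0, OF this n01] show
      "of_int (int (cnt 0 (z(k := 0))) - int (cnt 1 (z(k := 0)))) * v (z(k := 0)) =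
         (of_int (int (cnt 0 z) - int (cnt 1 z)) + 2) * v (z(k := 0))"
      by simp
  qed
  also have "\<dots> = (of_int (int (cnt 0 z) - int (cnt 1 z)) + 2) * (\<Sum>k\<in>{k. z k = 1}. v (z(k:=0)))"
    by (rule sum_distrib_left[symmetric])
  also have "\<dots> = (of_int (int (cnt 0 z) - int (cnt 1 z)) + 2) * R1 v z"
    by (simp only: R1_def op_eq[OF n01])
  finally have e1: "R1 (H1 v) z = (of_int (int (cnt 0 z) - int (cnt 1 z)) + 2) * R1 v z" .
  have e2: "H1 (R1 v) z = ((of_int (int (cnt 0 z) - int (cnt 1 z)) + 2) - 2) * R1 v z" by (simp add: H1_def)
  show ?thesis unfolding e1 e2 by (simp add: algebra_simps)
qed


lemma smul_zero: "c \<cdot>\<^sub>V 0\<^sub>V = 0\<^sub>V" by (simp add: smul3_def zero3_def)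
lemma smul_smul: "a \<cdot>\<^sub>V (b \<cdot>\<^sub>V w) = (a * b) \<cdot>\<^sub>V w" by (simp add: smul3_def fun_eq_iff)

lemma R1_smul: "R1 (c \<cdot>\<^sub>V w) = c \<cdot>\<^sub>V R1 w" unfolding R1_def by (rule op_smul)
lemma R2_smul: "R2 (c \<cdot>\<^sub>V w) = c \<cdot>\<^sub>V R2 w" unfolding R2_def by (rule op_smul)
lemma R1p_smul: "(R1 ^^ n) (c \<cdot>\<^sub>V w) = c \<cdot>\<^sub>V (R1 ^^ n) w" unfolding R1_def by (rule pow_smul)
lemma R2p_smul: "(R2 ^^ n) (c \<cdot>\<^sub>V w) = c \<cdot>\<^sub>V (R2 ^^ n) w" unfolding R2_def by (rule pow_smul)
lemma R1p_zero: "(R1 ^^ n) 0\<^sub>V = 0\<^sub>V" unfolding R1_def by (rule pow_zero)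
lemma R2p_zero: "(R2 ^^ n) 0\<^sub>V = 0\<^sub>V" unfolding R2_def by (rule pow_zero)
lemma R1_zero: "R1 0\<^sub>V = 0\<^sub>V" unfolding R1_def by (rule op_zero)
lemma R2_zero: "R2 0\<^sub>V = 0\<^sub>V" unfolding R2_def by (rule op_zero)
lemma L1_zero: "L1 0\<^sub>V = 0\<^sub>V" unfolding L1_def by (rule op_zero)
lemma L2_zero: "L2 0\<^sub>V = 0\<^sub>V" unfolding L2_def by (rule op_zero)

lemma R1_zero': "R1 (\<lambda>y. 0) = (\<lambda>y. 0)" using R1_zero by (simp add: zero3_def)
lemma R2_zero': "R2 (\<lambda>y. 0) = (\<lambda>y. 0)" using R2_zero by (simp add: zero3_def)

lemma p4: "L2 ((R1 ^^ i) w) = (R1 ^^ i) (L2 w)"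
  by (induction i) (simp_all add: c4)
lemma p5: "L1 ((R2 ^^ i) w) = (R2 ^^ i) (L1 w)"
  by (induction i) (simp_all add: c5)

lemma hR2:
  assumes "H2 v = m2 \<cdot>\<^sub>V v"
  shows "H2 ((R2 ^^ j) v) = (m2 - 2 * of_nat j) \<cdot>\<^sub>V (R2 ^^ j) v"
proof (induction j)
  case 0 then show ?case using assms by simp
next
  case (Suc j)
  show ?case
  proof (rule ext)
    fix z
    have "H2 ((R2 ^^ Suc j) v) z = R2 (H2 ((R2 ^^ j) v)) z - 2 * R2 ((R2 ^^ j) v) z"
      by (simp add: c8)
    also have "\<dots> = (m2 - 2 * of_nat (Suc j)) * (R2 ^^ Suc j) v z"
      by (simp only: Suc.IH R2_smul funpow.simps comp_apply) (simp add: smul3_def algebra_simps)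
    finally show "H2 ((R2 ^^ Suc j) v) z = ((m2 - 2 * of_nat (Suc j)) \<cdot>\<^sub>V (R2 ^^ Suc j) v) z"
      by (simp add: smul3_def)
  qed
qed

lemma hR1:
  assumes "H1 v = m1 \<cdot>\<^sub>V v"
  shows "H1 ((R1 ^^ j) v) = (m1 - 2 * of_nat j) \<cdot>\<^sub>V (R1 ^^ j) v"
proof (induction j)
  case 0 then show ?case using assms by simp
next
  case (Suc j)
  show ?case
  proof (rule ext)
    fix z
    have "H1 ((R1 ^^ Suc j) v) z = R1 (H1 ((R1 ^^ j) v)) z - 2 * R1 ((R1 ^^ j) v) z"
      by (simp add: c9)
    also have "\<dots> = (m1 - 2 * of_nat (Suc j)) * (R1 ^^ Suc j) v z"
      by (simp only: Suc.IH R1_smul funpow.simps comp_apply) (simp add: smul3_def algebra_simps)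
    finally show "H1 ((R1 ^^ Suc j) v) z = ((m1 - 2 * of_nat (Suc j)) \<cdot>\<^sub>V (R1 ^^ Suc j) v) z"
      by (simp add: smul3_def)
  qed
qed

lemma eL2:
  assumes "L2 v = 0\<^sub>V" "H2 v = m2 \<cdot>\<^sub>V v"
  shows "L2 ((R2 ^^ Suc j) v) = (of_nat (Suc j) * (m2 - of_nat j)) \<cdot>\<^sub>V (R2 ^^ j) v"
proof (induction j)
  case 0
  show ?case
  proof (rule ext)
    fix z show "L2 ((R2 ^^ Suc 0) v) z = ((of_nat (Suc 0) * (m2 - of_nat 0)) \<cdot>\<^sub>V (R2 ^^ 0) v) z"
      using assms by (simp add: c6 R2_zero' zero3_def smul3_def)
  qed
next
  case (Suc j)
  show ?case
  proof (rule ext)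
    fix z
    have "L2 ((R2 ^^ Suc (Suc j)) v) z = R2 (L2 ((R2 ^^ Suc j) v)) z + H2 ((R2 ^^ Suc j) v) z"
      by (simp add: c6)
    also have "\<dots> = (of_nat (Suc (Suc j)) * (m2 - of_nat (Suc j))) * (R2 ^^ Suc j) v z"
      by (simp only: Suc hR2[OF assms(2)] R2_smul) (simp add: smul3_def algebra_simps)
    finally show "L2 ((R2 ^^ Suc (Suc j)) v) z = ((of_nat (Suc (Suc j)) * (m2 - of_nat (Suc j))) \<cdot>\<^sub>V (R2 ^^ Suc j) v) z"
      by (simp add: smul3_def)
  qed
qed

lemma fL1:
  assumes "L1 v = 0\<^sub>V" "H1 v = m1 \<cdot>\<^sub>V v"
  shows "L1 ((R1 ^^ Suc j) v) = (of_nat (Suc j) * (m1 - of_nat j)) \<cdot>\<^sub>V (R1 ^^ j) v"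
proof (induction j)
  case 0
  show ?case
  proof (rule ext)
    fix z show "L1 ((R1 ^^ Suc 0) v) z = ((of_nat (Suc 0) * (m1 - of_nat 0)) \<cdot>\<^sub>V (R1 ^^ 0) v) z"
      using assms by (simp add: c7 R1_zero' zero3_def smul3_def)
  qed
next
  case (Suc j)
  show ?case
  proof (rule ext)
    fix z
    have "L1 ((R1 ^^ Suc (Suc j)) v) z = R1 (L1 ((R1 ^^ Suc j) v)) z + H1 ((R1 ^^ Suc j) v) z"
      by (simp add: c7)
    also have "\<dots> = (of_nat (Suc (Suc j)) * (m1 - of_nat (Suc j))) * (R1 ^^ Suc j) v z"
      by (simp only: Suc hR1[OF assms(2)] R1_smul) (simp add: smul3_def algebra_simps)
    finally show "L1 ((R1 ^^ Suc (Suc j)) v) z = ((of_nat (Suc (Suc j)) * (m1 - of_nat (Suc j))) \<cdot>\<^sub>V (R1 ^^ Suc j) v) z"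
      by (simp add: smul3_def)
  qed
qed

lemma cc:
  assumes "L3 u = 0\<^sub>V"
  shows "L3 ((R1 ^^ Suc i) u) = (- of_nat (Suc i)) \<cdot>\<^sub>V (R1 ^^ i) (L2 u)"
proof (induction i)
  case 0
  show ?case
  proof (rule ext)
    fix z show "L3 ((R1 ^^ Suc 0) u) z = ((- of_nat (Suc 0)) \<cdot>\<^sub>V (R1 ^^ 0) (L2 u)) z"
      using assms by (simp add: c2 R1_zero' zero3_def smul3_def)
  qed
next
  case (Suc i)
  show ?case
  proof (rule ext)
    fix z
    have "L3 ((R1 ^^ Suc (Suc i)) u) z = R1 (L3 ((R1 ^^ Suc i) u)) z - L2 ((R1 ^^ Suc i) u) z"
      by (simp add: c2)
    also have "\<dots> = (- of_nat (Suc (Suc i))) * (R1 ^^ Suc i) (L2 u) z"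
      by (simp only: Suc p4 R1_smul) (simp add: smul3_def algebra_simps)
    finally show "L3 ((R1 ^^ Suc (Suc i)) u) z = ((- of_nat (Suc (Suc i))) \<cdot>\<^sub>V (R1 ^^ Suc i) (L2 u)) z"
      by (simp add: smul3_def)
  qed
qed

lemma dd:
  assumes "L3 u = 0\<^sub>V"
  shows "L3 ((R2 ^^ Suc i) u) = (of_nat (Suc i)) \<cdot>\<^sub>V (R2 ^^ i) (L1 u)"
proof (induction i)
  case 0
  show ?case
  proof (rule ext)
    fix z show "L3 ((R2 ^^ Suc 0) u) z = ((of_nat (Suc 0)) \<cdot>\<^sub>V (R2 ^^ 0) (L1 u)) z"
      using assms by (simp add: c3 R2_zero' zero3_def smul3_def)
  qed
next
  case (Suc i)
  show ?case
  proof (rule ext)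
    fix z
    have "L3 ((R2 ^^ Suc (Suc i)) u) z = R2 (L3 ((R2 ^^ Suc i) u)) z + L1 ((R2 ^^ Suc i) u) z"
      by (simp add: c3)
    also have "\<dots> = (of_nat (Suc (Suc i))) * (R2 ^^ Suc i) (L1 u) z"
      by (simp only: Suc p5 R2_smul) (simp add: smul3_def algebra_simps)
    finally show "L3 ((R2 ^^ Suc (Suc i)) u) z = ((of_nat (Suc (Suc i))) \<cdot>\<^sub>V (R2 ^^ Suc i) (L1 u)) z"
      by (simp add: smul3_def)
  qed
qed


lemma L3v:
  assumes "L1 v = 0\<^sub>V" "L2 v = 0\<^sub>V"
  shows "L3 v = 0\<^sub>V"
  by (rule ext) (simp add: c1 assms L1_zero L2_zero, simp add: zero3_def)

theorem lemma2p9: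
  fixes v :: "('n::finite) vec3" and m1 m2 :: complex
  assumes "v \<noteq> 0\<^sub>V"
    and "L1 v = 0\<^sub>V" and "L2 v = 0\<^sub>V"
    and "H1 v = m1 \<cdot>\<^sub>V v" and "H2 v = m2 \<cdot>\<^sub>V v"
  shows "(\<forall>i j. L3 ((R1 ^^ i) v) = 0\<^sub>V \<and> L3 ((R2 ^^ j) v) = 0\<^sub>V)
    \<and> (\<forall>i j. i \<ge> 1 \<longrightarrow> j \<ge> 1 \<longrightarrow>
        L3 ((R1 ^^ i) ((R2 ^^ j) v)) =
          (- (of_nat i * of_nat j * (m2 - of_nat j + 1))) \<cdot>\<^sub>V ((R1 ^^ (i - 1)) ((R2 ^^ (j - 1)) v))
      \<and> L3 ((R2 ^^ j) ((R1 ^^ i) v)) =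
          (of_nat i * of_nat j * (m1 - of_nat i + 1)) \<cdot>\<^sub>V ((R2 ^^ (j - 1)) ((R1 ^^ (i - 1)) v)))"
proof -
  have L3v': "L3 v = 0\<^sub>V" using L3v assms(2,3) .
  have A: "L3 ((R1 ^^ i) v) = 0\<^sub>V" for i
  proof (cases i)
    case 0 then show ?thesis using L3v' by (simp only: funpow_0)
  next
    case (Suc i')
    have "L3 ((R1 ^^ Suc i') v) = (- of_nat (Suc i')) \<cdot>\<^sub>V (R1 ^^ i') (L2 v)" by (rule cc[OF L3v'])
    also have "\<dots> = 0\<^sub>V" unfolding assms(3) R1p_zero smul_zero ..
    finally show ?thesis unfolding Suc .
  qed
  have B: "L3 ((R2 ^^ j) v) = 0\<^sub>V" for j
  proof (cases j)
    case 0 then show ?thesis using L3v' by (simp only: funpow_0)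
  next
    case (Suc j')
    have "L3 ((R2 ^^ Suc j') v) = (of_nat (Suc j')) \<cdot>\<^sub>V (R2 ^^ j') (L1 v)" by (rule dd[OF L3v'])
    also have "\<dots> = 0\<^sub>V" unfolding assms(2) R2p_zero smul_zero ..
    finally show ?thesis unfolding Suc .
  qed
  have C: "L3 ((R1 ^^ i) ((R2 ^^ j) v)) =
          (- (of_nat i * of_nat j * (m2 - of_nat j + 1))) \<cdot>\<^sub>V ((R1 ^^ (i - 1)) ((R2 ^^ (j - 1)) v))
      \<and> L3 ((R2 ^^ j) ((R1 ^^ i) v)) =
          (of_nat i * of_nat j * (m1 - of_nat i + 1)) \<cdot>\<^sub>V ((R2 ^^ (j - 1)) ((R1 ^^ (i - 1)) v))"
    if ij: "i \<ge> 1" "j \<ge> 1" for i j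
  proof -
    obtain i' where i: "i = Suc i'" using ij(1) by (cases i) auto
    obtain j' where j: "j = Suc j'" using ij(2) by (cases j) auto
    have 1: "L3 ((R1 ^^ Suc i') ((R2 ^^ Suc j') v)) =
       (- of_nat (Suc i')) \<cdot>\<^sub>V (R1 ^^ i') (L2 ((R2 ^^ Suc j') v))"
      by (rule cc[OF B])
    have 2: "L3 ((R2 ^^ Suc j') ((R1 ^^ Suc i') v)) =
       (of_nat (Suc j')) \<cdot>\<^sub>V (R2 ^^ j') (L1 ((R1 ^^ Suc i') v))"
      by (rule dd[OF A])
    have s1: "(- of_nat (Suc i')) * (of_nat (Suc j') * (m2 - of_nat j')) =
       - (of_nat (Suc i') * of_nat (Suc j') * (m2 - of_nat (Suc j') + 1))"
      by (simp add: algebra_simps)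
    have s2: "(of_nat (Suc j')) * (of_nat (Suc i') * (m1 - of_nat i')) =
       (of_nat (Suc i') * of_nat (Suc j') * (m1 - of_nat (Suc i') + 1))"
      by (simp add: algebra_simps)
    show ?thesis
      unfolding i j diff_Suc_1
      unfolding 1 2 eL2[OF assms(3,5)] fL1[OF assms(2,4)] R1p_smul R2p_smul smul_smul s1 s2
      by (rule conjI refl)+
  qed
  show ?thesis using A B C by blast
qed

end
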